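(* If $G$ is a finite simple chordless graph with $\Delta(G)\ge 3$, then any two proper $(\Delta(G)+1)$-edge-colorings of $G$ are $K$-equivalent.
   Context: A (proper) $t$-coloring of a graph $G$ is a map $\alpha:E(G)\to\{1,\dots,t\}$ such that adjacent edges receive different colors. For distinct colors $c,d$, $K_\alpha(c,d)$ denotes the subgraph of $G$ formed by the edges colored $c$ or $d$. A Kempe chain is a connected component of some $K_\alpha(c,d)$; a $K$-change consists of choosing a Kempe chain and swapping the two colors on its edges. Two $t$-colorings are $K$-equivalent if one can be obtained from the other by a finite sequence of $K$-changes, all using colors from $\{1,\dots,t\}$. A graph is chordless if no cycle $C$ of $G$ has a chord, i.e. an edge of $G$ joining two non-consecutive vertices of $C$. $\Delta(G)$ is the maximum degree. *)

theory Defs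
  imports Main
begin

definition simple_graph :: "'a set \<Rightarrow> 'a set set \<Rightarrow> bool" where
  "simple_graph V E \<longleftrightarrow> finite V \<and>
     (\<forall>e\<in>E. \<exists>u v. u \<noteq> v \<and> u \<in> V \<and> v \<in> V \<and> e = {u, v})"

definition degree :: "'a set set \<Rightarrow> 'a \<Rightarrow> nat" where
  "degree E v = card {e\<in>E. v \<in> e}"

definition max_degree :: "'a set \<Rightarrow> 'a set set \<Rightarrow> nat" where
  "max_degree V E = Max (insert 0 (degree E ` V))"

definition is_cycle :: "'a set set \<Rightarrow> 'a list \<Rightarrow> bool" where
  "is_cycle E vs \<longleftrightarrow> length vs \<ge> 3 \<and> distinct vs \<and>
     (\<forall>i < length vs. {vs ! i, vs ! ((i + 1) mod length vs)} \<in> E)"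

definition chordless :: "'a set set \<Rightarrow> bool" where
  "chordless E \<longleftrightarrow> (\<forall>vs i j. is_cycle E vs \<and> i < length vs \<and> j < length vs \<and> i \<noteq> j
       \<and> j \<noteq> (i + 1) mod length vs \<and> i \<noteq> (j + 1) mod length vs
       \<longrightarrow> {vs ! i, vs ! j} \<notin> E)"

definition proper_coloring :: "'a set set \<Rightarrow> nat \<Rightarrow> ('a set \<Rightarrow> nat) \<Rightarrow> bool" where
  "proper_coloring E t \<alpha> \<longleftrightarrow> (\<forall>e\<in>E. \<alpha> e \<in> {1..t}) \<and>
     (\<forall>e\<in>E. \<forall>f\<in>E. e \<noteq> f \<and> e \<inter> f \<noteq> {} \<longrightarrow> \<alpha> e \<noteq> \<alpha> f)"

definition kedges :: "'a set set \<Rightarrow> ('a set \<Rightarrow> nat) \<Rightarrow> nat \<Rightarrow> nat \<Rightarrow> 'a set set" where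
  "kedges E \<alpha> c d = {e\<in>E. \<alpha> e = c \<or> \<alpha> e = d}"

text \<open>Kempe chain: edge set of a connected component of K_alpha(c,d) (edges connected
  through shared endpoints).\<close>
definition kempe_chain :: "'a set set \<Rightarrow> ('a set \<Rightarrow> nat) \<Rightarrow> nat \<Rightarrow> nat \<Rightarrow> 'a set set \<Rightarrow> bool" where
  "kempe_chain E \<alpha> c d C \<longleftrightarrow> (\<exists>e0 \<in> kedges E \<alpha> c d.
     C = {f \<in> kedges E \<alpha> c d. (e0, f) \<in>
       {(e, f). e \<in> kedges E \<alpha> c d \<and> f \<in> kedges E \<alpha> c d \<and> e \<inter> f \<noteq> {}}\<^sup>*})"

definition swap_col :: "nat \<Rightarrow> nat \<Rightarrow> nat \<Rightarrow> nat" where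
  "swap_col c d x = (if x = c then d else if x = d then c else x)"

definition kempe_change :: "'a set set \<Rightarrow> nat \<Rightarrow> ('a set \<Rightarrow> nat) \<Rightarrow> ('a set \<Rightarrow> nat) \<Rightarrow> bool" where
  "kempe_change E t \<alpha> \<beta> \<longleftrightarrow> (\<exists>c d C. c \<in> {1..t} \<and> d \<in> {1..t} \<and> c \<noteq> d \<and>
     kempe_chain E \<alpha> c d C \<and>
     \<beta> = (\<lambda>e. if e \<in> C then swap_col c d (\<alpha> e) else \<alpha> e))"

definition K_equivalent :: "'a set set \<Rightarrow> nat \<Rightarrow> ('a set \<Rightarrow> nat) \<Rightarrow> ('a set \<Rightarrow> nat) \<Rightarrow> bool" where
  "K_equivalent E t \<alpha> \<beta> \<longleftrightarrow> (\<exists>\<gamma>. (kempe_change E t)\<^sup>*\<^sup>* \<alpha> \<gamma> \<and> (\<forall>e\<in>E. \<gamma> e = \<beta> e))"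

end

theory Submission
  imports Defs
begin

definition kr :: "'a set set \<Rightarrow> ('a set \<Rightarrow> nat) \<Rightarrow> nat \<Rightarrow> nat \<Rightarrow> ('a set \<times> 'a set) set" where
  "kr E \<alpha> c d = {(e, f). e \<in> kedges E \<alpha> c d \<and> f \<in> kedges E \<alpha> c d \<and> e \<inter> f \<noteq> {}}"

lemma kempe_chain_alt:
  "kempe_chain E \<alpha> c d C \<longleftrightarrow> (\<exists>e0\<in>kedges E \<alpha> c d. C = {f \<in> kedges E \<alpha> c d. (e0, f) \<in> (kr E \<alpha> c d)\<^sup>*})"
  by (simp add: kempe_chain_def kr_def)

lemma swap_col_in: "x \<in> {c, d} \<Longrightarrow> swap_col c d x \<in> {c, d}"
  by (auto simp: swap_col_def)

lemma swap_col_inj: "swap_col c d x = swap_col c d y \<Longrightarrow> x = y"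
  by (auto simp: swap_col_def split: if_splits)

lemma kempe_change_proper:
  assumes P: "proper_coloring E k \<alpha>" and K: "kempe_change E k \<alpha> \<beta>"
  shows "proper_coloring E k \<beta>"
proof -
  obtain c d C where cd: "c \<in> {1..k}" "d \<in> {1..k}" "c \<noteq> d"
    and ch: "kempe_chain E \<alpha> c d C"
    and b: "\<beta> = (\<lambda>e. if e \<in> C then swap_col c d (\<alpha> e) else \<alpha> e)"
    using K unfolding kempe_change_def by blast
  obtain e0 where e0: "e0 \<in> kedges E \<alpha> c d"
    and C: "C = {f \<in> kedges E \<alpha> c d. (e0, f) \<in> (kr E \<alpha> c d)\<^sup>*}"
    using ch unfolding kempe_chain_alt by blast
  have Ck: "\<And>e. e \<in> C \<Longrightarrow> \<alpha> e \<in> {c, d}" using C by (auto simp: kedges_def)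
  have out: "\<alpha> f \<notin> {c, d}" if "e \<in> C" "f \<notin> C" "f \<in> E" "e \<inter> f \<noteq> {}" for e f
  proof
    assume "\<alpha> f \<in> {c, d}"
    then have fk: "f \<in> kedges E \<alpha> c d" using that by (auto simp: kedges_def)
    have "(e, f) \<in> kr E \<alpha> c d" using that fk C by (auto simp: kr_def)
    moreover have "(e0, e) \<in> (kr E \<alpha> c d)\<^sup>*" using that C by auto
    ultimately have "(e0, f) \<in> (kr E \<alpha> c d)\<^sup>*" by (meson rtrancl_into_rtrancl)
    then show False using fk that C by auto
  qed
  have r1: "\<forall>e\<in>E. \<beta> e \<in> {1..k}"
  proof
    fix e assume "e \<in> E"
    show "\<beta> e \<in> {1..k}"
    proof (cases "e \<in> C")
      case True
      then have "swap_col c d (\<alpha> e) \<in> {c, d}" using Ck swap_col_in by blast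
      then show ?thesis using True b cd by auto
    next
      case False
      then show ?thesis using b P \<open>e \<in> E\<close> by (auto simp: proper_coloring_def)
    qed
  qed
  have r2: "\<beta> e \<noteq> \<beta> f" if "e \<in> E" "f \<in> E" "e \<noteq> f" "e \<inter> f \<noteq> {}" for e f
  proof -
    have ne: "\<alpha> e \<noteq> \<alpha> f" using P that by (auto simp: proper_coloring_def)
    consider "e \<in> C" "f \<in> C" | "e \<in> C" "f \<notin> C" | "e \<notin> C" "f \<in> C" | "e \<notin> C" "f \<notin> C" by blast
    then show ?thesis
    proof cases
      case 1 then show ?thesis using b ne swap_col_inj by auto
    next
      case 2
      have "\<alpha> f \<notin> {c, d}" using out[OF 2 \<open>f \<in> E\<close> \<open>e \<inter> f \<noteq> {}\<close>] .
      moreover have "swap_col c d (\<alpha> e) \<in> {c, d}" using Ck 2 swap_col_in by blast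
      ultimately show ?thesis using b 2 by auto
    next
      case 3
      have "\<alpha> e \<notin> {c, d}" using out[OF 3(2) 3(1) \<open>e \<in> E\<close>] that(4) by blast
      moreover have "swap_col c d (\<alpha> f) \<in> {c, d}" using Ck 3 swap_col_in by blast
      ultimately show ?thesis using b 3 by auto
    next
      case 4 then show ?thesis using b ne by auto
    qed
  qed
  show ?thesis using r1 r2 by (auto simp: proper_coloring_def)
qed

lemma kempe_rtrancl_proper:
  assumes "(kempe_change E k)\<^sup>*\<^sup>* \<alpha> \<beta>" "proper_coloring E k \<alpha>"
  shows "proper_coloring E k \<beta>"
  using assms by (induction rule: rtranclp_induct) (auto intro: kempe_change_proper)

lemma proper_mono: "proper_coloring E k \<alpha> \<Longrightarrow> E' \<subseteq> E \<Longrightarrow> proper_coloring E' k \<alpha>"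
  unfolding proper_coloring_def by (meson subsetD)

lemma single_recolor:
  assumes P: "proper_coloring E k \<delta>" and eE: "e \<in> E" and y: "y \<in> {1..k}" "y \<noteq> \<delta> e"
    and free: "\<forall>f\<in>E. f \<noteq> e \<and> f \<inter> e \<noteq> {} \<longrightarrow> \<delta> f \<noteq> y"
  shows "kempe_change E k \<delta> (\<delta>(e := y))"
proof -
  have de: "\<delta> e \<in> {1..k}" using P eE by (auto simp: proper_coloring_def)
  have ek: "e \<in> kedges E \<delta> (\<delta> e) y" using eE by (auto simp: kedges_def)
  have only: "f = e" if "(e, f) \<in> (kr E \<delta> (\<delta> e) y)\<^sup>*" for f
    using that
  proof (induction rule: rtrancl_induct)
    case base then show ?case by simp
  next
    case (step g h)
    then have "h \<in> E" "\<delta> h = \<delta> e \<or> \<delta> h = y" "g \<inter> h \<noteq> {}" by (auto simp: kr_def kedges_def)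
    show ?case
    proof (rule ccontr)
      assume "h \<noteq> e"
      then have "\<delta> h \<noteq> \<delta> e" using P \<open>h \<in> E\<close> eE \<open>g \<inter> h \<noteq> {}\<close> step.IH
        by (auto simp: proper_coloring_def)
      moreover have "\<delta> h \<noteq> y" using free \<open>h \<in> E\<close> \<open>h \<noteq> e\<close> \<open>g \<inter> h \<noteq> {}\<close> step.IH by auto
      ultimately show False using \<open>\<delta> h = \<delta> e \<or> \<delta> h = y\<close> by blast
    qed
  qed
  have ch: "kempe_chain E \<delta> (\<delta> e) y {e}"
    unfolding kempe_chain_alt
    apply (rule bexI[OF _ ek])
    using only ek by auto
  have "\<delta>(e := y) = (\<lambda>f. if f \<in> {e} then swap_col (\<delta> e) y (\<delta> f) else \<delta> f)"
    by (auto simp: swap_col_def)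
  then show ?thesis unfolding kempe_change_def using de y ch by blast
qed


lemma leaf:
  assumes path: "(e0, f) \<in> (kr E \<delta> c d)\<^sup>*"
    and e0: "e0 \<in> kedges E \<delta> c d - {e}"
    and uniq: "\<forall>g\<in>kedges E \<delta> c d - {e}. \<forall>h\<in>kedges E \<delta> c d - {e}.
                 g \<inter> e \<noteq> {} \<longrightarrow> h \<inter> e \<noteq> {} \<longrightarrow> g = h"
  shows "(f \<noteq> e \<longrightarrow> (e0, f) \<in> (kr (E - {e}) \<delta> c d)\<^sup>*) \<and>
         (f = e \<longrightarrow> (\<exists>g\<in>kedges E \<delta> c d - {e}. g \<inter> e \<noteq> {} \<and> (e0, g) \<in> (kr (E - {e}) \<delta> c d)\<^sup>*))"
  using path
proof (induction rule: rtrancl_induct)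
  case base then show ?case using e0 by auto
next
  case (step f h)
  have kE: "kedges (E - {e}) \<delta> c d = kedges E \<delta> c d - {e}" by (auto simp: kedges_def)
  have fh: "f \<in> kedges E \<delta> c d" "h \<in> kedges E \<delta> c d" "f \<inter> h \<noteq> {}" using step(2) by (auto simp: kr_def)
  show ?case
  proof (cases "f = e")
    case True
    then obtain g where g: "g \<in> kedges E \<delta> c d - {e}" "g \<inter> e \<noteq> {}" "(e0, g) \<in> (kr (E - {e}) \<delta> c d)\<^sup>*"
      using step.IH by blast
    have "h \<noteq> e \<Longrightarrow> h = g" using uniq g fh True by blast
    then show ?thesis using g by blast
  next
    case False
    then have IH: "(e0, f) \<in> (kr (E - {e}) \<delta> c d)\<^sup>*" using step.IH by blast
    show ?thesis
    proof (cases "h = e")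
      case True
      then show ?thesis using IH False fh by blast
    next
      case False2: False
      have "(f, h) \<in> kr (E - {e}) \<delta> c d" using fh False False2 kE by (auto simp: kr_def)
      then show ?thesis using IH False2 by (meson rtrancl_into_rtrancl)
    qed
  qed
qed

lemma lift_step:
  assumes fin: "finite E" and eE: "e \<in> E" and euv: "e = {u, v}"
    and du: "degree E u \<le> 2" and dv: "degree E v < k"
    and prp: "proper_coloring E k \<delta>"
    and kc: "kempe_change (E - {e}) k \<gamma> \<gamma>'"
    and agree: "\<forall>f\<in>E - {e}. \<delta> f = \<gamma> f"
  shows "\<exists>\<delta>'. (kempe_change E k)\<^sup>*\<^sup>* \<delta> \<delta>' \<and> (\<forall>f\<in>E - {e}. \<delta>' f = \<gamma>' f)"
proof -
  obtain c d C where cd: "c \<in> {1..k}" "d \<in> {1..k}" "c \<noteq> d"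
    and ch0: "kempe_chain (E - {e}) \<gamma> c d C"
    and g': "\<gamma>' = (\<lambda>f. if f \<in> C then swap_col c d (\<gamma> f) else \<gamma> f)"
    using kc unfolding kempe_change_def by blast
  have keq: "kedges (E - {e}) \<gamma> c d = kedges (E - {e}) \<delta> c d"
    using agree unfolding kedges_def by (metis (no_types, lifting))
  have kreq: "kr (E - {e}) \<gamma> c d = kr (E - {e}) \<delta> c d" by (simp add: kr_def keq)
  obtain e0 where e0: "e0 \<in> kedges (E - {e}) \<delta> c d"
    and C: "C = {f \<in> kedges (E - {e}) \<delta> c d. (e0, f) \<in> (kr (E - {e}) \<delta> c d)\<^sup>*}"
    using ch0 unfolding kempe_chain_alt keq kreq by blast
  have kE: "kedges (E - {e}) \<delta> c d = kedges E \<delta> c d - {e}" by (auto simp: kedges_def)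
  have de: "\<delta> e \<in> {1..k}" using prp eE by (auto simp: proper_coloring_def)
  show ?thesis
  proof (cases "\<exists>y\<in>{1..k}. y \<notin> {c, d} \<and> (\<forall>f\<in>E. f \<noteq> e \<and> f \<inter> e \<noteq> {} \<longrightarrow> \<delta> f \<noteq> y)")
    case True
    then obtain y where y: "y \<in> {1..k}" "y \<notin> {c, d}" "\<forall>f\<in>E. f \<noteq> e \<and> f \<inter> e \<noteq> {} \<longrightarrow> \<delta> f \<noteq> y"
      by blast
    define \<delta>1 where "\<delta>1 = \<delta>(e := y)"
    have s1: "(kempe_change E k)\<^sup>*\<^sup>* \<delta> \<delta>1"
    proof (cases "\<delta> e = y")
      case True then have "\<delta>1 = \<delta>" by (auto simp: \<delta>1_def)
      then show ?thesis by simp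
    next
      case False
      then have "kempe_change E k \<delta> \<delta>1" unfolding \<delta>1_def
        using single_recolor[OF prp eE y(1) _ y(3)] by auto
      then show ?thesis by auto
    qed
    have k1: "kedges E \<delta>1 c d = kedges (E - {e}) \<delta> c d"
      using y(2) by (auto simp: kedges_def \<delta>1_def)
    have kr1: "kr E \<delta>1 c d = kr (E - {e}) \<delta> c d" by (simp add: kr_def k1)
    have ch1: "kempe_chain E \<delta>1 c d C" unfolding kempe_chain_alt k1 kr1 using e0 C by blast
    define \<delta>2 where "\<delta>2 = (\<lambda>f. if f \<in> C then swap_col c d (\<delta>1 f) else \<delta>1 f)"
    have "kempe_change E k \<delta>1 \<delta>2" unfolding kempe_change_def \<delta>2_def using cd ch1 by blast
    then have "(kempe_change E k)\<^sup>*\<^sup>* \<delta> \<delta>2" using s1 by auto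
    moreover have "\<forall>f\<in>E - {e}. \<delta>2 f = \<gamma>' f" using agree by (auto simp: \<delta>2_def g' \<delta>1_def)
    ultimately show ?thesis by blast
  next
    case False
    then have noy: "\<And>y. y \<in> {1..k} \<Longrightarrow> y \<notin> {c, d} \<Longrightarrow> \<exists>f\<in>E. f \<noteq> e \<and> f \<inter> e \<noteq> {} \<and> \<delta> f = y"
      by blast
    have pr: "\<And>f g. f \<in> E \<Longrightarrow> g \<in> E \<Longrightarrow> f \<noteq> g \<Longrightarrow> f \<inter> g \<noteq> {} \<Longrightarrow> \<delta> f \<noteq> \<delta> g"
      using prp by (auto simp: proper_coloring_def)
    have dcd: "\<delta> e \<in> {c, d}"
    proof (rule ccontr)
      assume "\<delta> e \<notin> {c, d}"
      then obtain f where "f \<in> E" "f \<noteq> e" "f \<inter> e \<noteq> {}" "\<delta> f = \<delta> e" using noy[OF de] by blast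
      then show False using pr eE by blast
    qed
    have uniq: "\<forall>g\<in>kedges E \<delta> c d - {e}. \<forall>h\<in>kedges E \<delta> c d - {e}.
                 g \<inter> e \<noteq> {} \<longrightarrow> h \<inter> e \<noteq> {} \<longrightarrow> g = h"
    proof (intro ballI impI, rule ccontr)
      fix g h assume gk: "g \<in> kedges E \<delta> c d - {e}" and hk: "h \<in> kedges E \<delta> c d - {e}"
        and ge: "g \<inter> e \<noteq> {}" and he: "h \<inter> e \<noteq> {}" and gh: "g \<noteq> h"
      have gE: "g \<in> E" "\<delta> g \<in> {c, d}" "g \<noteq> e" using gk by (auto simp: kedges_def)
      have hE: "h \<in> E" "\<delta> h \<in> {c, d}" "h \<noteq> e" using hk by (auto simp: kedges_def)
      have "\<delta> g \<noteq> \<delta> e" using pr gE eE ge by blast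
      moreover have "\<delta> h \<noteq> \<delta> e" using pr hE eE he by blast
      ultimately have same: "\<delta> g = \<delta> h" using gE hE dcd cd by auto
      have disj: "g \<inter> h = {}" using pr gE hE gh same by blast
      define Nu where "Nu = {f\<in>E. u \<in> f} - {e}"
      define Nv where "Nv = {f\<in>E. v \<in> f} - {e}"
      obtain a b where ab: "a \<in> Nu" "b \<in> Nv" "\<delta> a = \<delta> b" "\<delta> a \<in> {c, d}" "\<delta> a \<noteq> \<delta> e"
      proof -
        have "(u \<in> g \<and> v \<in> h) \<or> (v \<in> g \<and> u \<in> h)" using ge he disj euv by blast
        then show ?thesis
        proof
          assume "u \<in> g \<and> v \<in> h"
          then show ?thesis using that[of g h] gE hE same \<open>\<delta> g \<noteq> \<delta> e\<close> by (auto simp: Nu_def Nv_def)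
        next
          assume "v \<in> g \<and> u \<in> h"
          then show ?thesis using that[of h g] gE hE same \<open>\<delta> g \<noteq> \<delta> e\<close> by (auto simp: Nu_def Nv_def)
        qed
      qed
      have finU: "finite {f\<in>E. u \<in> f}" "finite {f\<in>E. v \<in> f}" using fin by auto
      have cNu: "card Nu \<le> 1"
      proof -
        have "e \<in> {f\<in>E. u \<in> f}" using eE euv by auto
        then have "card Nu = degree E u - 1" unfolding Nu_def degree_def
          using finU by (simp add: card_Diff_singleton)
        then show ?thesis using du by simp
      qed
      have Nu1: "Nu = {a}"
        using cNu ab(1) card_le_Suc0_iff_eq[of Nu] fin unfolding Nu_def by auto
      have cNv: "card Nv + 2 \<le> k"
      proof -
        have "e \<in> {f\<in>E. v \<in> f}" using eE euv by auto
        then have "card Nv = degree E v - 1" unfolding Nv_def degree_def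
          using finU by (simp add: card_Diff_singleton)
        moreover have "degree E v \<ge> 1" unfolding degree_def
          using \<open>e \<in> {f\<in>E. v \<in> f}\<close> finU card_0_eq[of "{f\<in>E. v \<in> f}"] by fastforce
        ultimately show ?thesis using dv by simp
      qed
      define T where "T = insert (\<delta> e) (\<delta> ` Nv)"
      have sub: "{1..k} \<subseteq> T"
      proof
        fix y assume y: "y \<in> {1..k}"
        show "y \<in> T"
        proof (cases "y \<in> {c, d}")
          case True
          then have "y = \<delta> e \<or> y = \<delta> b" using ab dcd cd by auto
          then show ?thesis using ab(2) by (auto simp: T_def)
        next
          case False
          then obtain f where f: "f \<in> E" "f \<noteq> e" "f \<inter> e \<noteq> {}" "\<delta> f = y" using noy[OF y] by blast
          have "u \<in> f \<or> v \<in> f" using f(3) euv by auto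
          then show ?thesis
          proof
            assume "u \<in> f"
            then have "f \<in> Nu" using f by (auto simp: Nu_def)
            then have "f = a" using Nu1 by auto
            then show ?thesis using ab False f by auto
          next
            assume "v \<in> f"
            then have "f \<in> Nv" using f by (auto simp: Nv_def)
            then show ?thesis using f by (auto simp: T_def)
          qed
        qed
      qed
      have finNv: "finite Nv" using finU by (auto simp: Nv_def)
      have "card T \<le> card Nv + 1" unfolding T_def
        using card_insert_le_m1 card_image_le[OF finNv, of \<delta>]
        by (metis Suc_eq_plus1 card_insert_if finNv finite_imageI le_SucI not_less_eq_eq)
      moreover have "k \<le> card T" using card_mono[OF _ sub] finNv by (simp add: T_def)
      ultimately show False using cNv by simp
    qed
    define K where "K = {f \<in> kedges E \<delta> c d. (e0, f) \<in> (kr E \<delta> c d)\<^sup>*}"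
    have e0': "e0 \<in> kedges E \<delta> c d - {e}" using e0 kE by simp
    have chK: "kempe_chain E \<delta> c d K" unfolding kempe_chain_alt K_def using e0' by blast
    have KC: "f \<in> K \<longleftrightarrow> f \<in> C" if "f \<noteq> e" for f
    proof
      assume "f \<in> K"
      then have "(e0, f) \<in> (kr E \<delta> c d)\<^sup>*" "f \<in> kedges E \<delta> c d" by (auto simp: K_def)
      then show "f \<in> C" using leaf[OF _ e0' uniq] that kE C by auto
    next
      assume "f \<in> C"
      then have p: "(e0, f) \<in> (kr (E - {e}) \<delta> c d)\<^sup>*" "f \<in> kedges E \<delta> c d" using C kE by auto
      have "kr (E - {e}) \<delta> c d \<subseteq> kr E \<delta> c d" by (auto simp: kr_def kedges_def)
      then have "(e0, f) \<in> (kr E \<delta> c d)\<^sup>*" using p(1) rtrancl_mono by blast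
      then show "f \<in> K" using p(2) by (auto simp: K_def)
    qed
    define \<delta>2 where "\<delta>2 = (\<lambda>f. if f \<in> K then swap_col c d (\<delta> f) else \<delta> f)"
    have "kempe_change E k \<delta> \<delta>2" unfolding kempe_change_def \<delta>2_def using cd chK by blast
    moreover have "\<forall>f\<in>E - {e}. \<delta>2 f = \<gamma>' f" using agree KC by (auto simp: \<delta>2_def g')
    ultimately show ?thesis by blast
  qed
qed


lemma lift_seq:
  assumes fin: "finite E" and eE: "e \<in> E" and euv: "e = {u, v}"
    and du: "degree E u \<le> 2" and dv: "degree E v < k"
    and seq: "(kempe_change (E - {e}) k)\<^sup>*\<^sup>* \<gamma>0 \<gamma>1"
    and prp: "proper_coloring E k \<delta>"
    and agree: "\<forall>f\<in>E - {e}. \<delta> f = \<gamma>0 f"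
  shows "\<exists>\<delta>'. (kempe_change E k)\<^sup>*\<^sup>* \<delta> \<delta>' \<and> (\<forall>f\<in>E - {e}. \<delta>' f = \<gamma>1 f)"
  using seq
proof (induction rule: rtranclp_induct)
  case base then show ?case using agree by blast
next
  case (step y z)
  then obtain \<delta>1 where d1: "(kempe_change E k)\<^sup>*\<^sup>* \<delta> \<delta>1" "\<forall>f\<in>E - {e}. \<delta>1 f = y f" by blast
  have p1: "proper_coloring E k \<delta>1" using kempe_rtrancl_proper[OF d1(1) prp] .
  obtain \<delta>2 where "(kempe_change E k)\<^sup>*\<^sup>* \<delta>1 \<delta>2" "\<forall>f\<in>E - {e}. \<delta>2 f = z f"
    using lift_step[OF fin eE euv du dv p1 step(2) d1(2)] by blast
  then show ?case using d1(1) by (meson rtranclp_trans)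
qed

lemma low_degree:
  assumes fin: "finite E" and smp: "\<forall>e\<in>E. \<exists>u v. u \<noteq> v \<and> e = {u, v}"
    and cl: "chordless E" and ne: "E \<noteq> {}"
  shows "\<exists>e\<in>E. \<exists>u\<in>e. degree E u \<le> 2"
proof (rule ccontr)
  assume "\<not> ?thesis"
  then have H: "\<And>e u. e \<in> E \<Longrightarrow> u \<in> e \<Longrightarrow> degree E u \<ge> 3" by force
  define VS where "VS = \<Union>E"
  have "\<forall>e\<in>E. finite e" using smp by auto
  then have fVS: "finite VS" unfolding VS_def using fin by (simp add: finite_Union)
  define P where "P = {p. distinct p \<and> set p \<subseteq> VS \<and> p \<noteq> [] \<and>
                        (\<forall>i. Suc i < length p \<longrightarrow> {p!i, p!Suc i} \<in> E)}"
  have "P \<subseteq> {p. set p \<subseteq> VS \<and> length p \<le> card VS}"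
  proof
    fix p assume "p \<in> P"
    then have "distinct p" "set p \<subseteq> VS" unfolding P_def by auto
    then show "p \<in> {p. set p \<subseteq> VS \<and> length p \<le> card VS}"
      using card_mono[OF fVS, of "set p"] distinct_card[of p] by simp
  qed
  then have fP: "finite P" by (rule finite_subset) (rule finite_lists_length_le[OF fVS])
  obtain e1 where "e1 \<in> E" using ne by blast
  then have "\<exists>u v. u \<noteq> v \<and> e1 = {u, v}" using smp by (rule bspec[rotated])
  then obtain a b where ab0: "a \<noteq> b" "e1 = {a, b}" by (elim exE conjE)
  then have ab: "a \<noteq> b" "{a, b} \<in> E" using \<open>e1 \<in> E\<close> by auto
  have abP: "[a, b] \<in> P" using ab unfolding P_def VS_def
    by (auto simp: less_Suc_eq nth_Cons split: nat.splits)
  define m where "m = Max (length ` P)"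
  have "m \<in> length ` P" unfolding m_def using fP abP by (intro Max_in) auto
  then obtain p where pP: "p \<in> P" and lp: "length p = m" by blast
  have maxp: "\<And>q. q \<in> P \<Longrightarrow> length q \<le> length p" using lp fP unfolding m_def by auto
  have len2: "length p \<ge> 2" using maxp[OF abP] by simp
  have pd: "distinct p" and pV: "set p \<subseteq> VS" and pe: "\<And>i. Suc i < length p \<Longrightarrow> {p!i, p!Suc i} \<in> E"
    using pP unfolding P_def by auto
  define x where "x = p ! 0"
  have nb: "w \<in> set p" if "{x, w} \<in> E" for w
  proof (rule ccontr)
    assume wn: "w \<notin> set p"
    have "w # p \<in> P" unfolding P_def
    proof (intro CollectI conjI allI impI)
      show "distinct (w # p)" using pd wn by simp
      show "set (w # p) \<subseteq> VS" using pV that unfolding VS_def by auto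
      show "w # p \<noteq> []" by simp
    next
      fix i assume i: "Suc i < length (w # p)"
      show "{(w # p) ! i, (w # p) ! Suc i} \<in> E"
      proof (cases i)
        case 0 then show ?thesis using that by (simp add: x_def insert_commute)
      next
        case (Suc j) then show ?thesis using pe i by simp
      qed
    qed
    then show False using maxp by fastforce
  qed
  have e01: "{p!0, p!1} \<in> E" using pe[of 0] len2 by simp
  then have dx: "degree E x \<ge> 3" using H x_def by auto
  define I where "I = {i. 0 < i \<and> i < length p \<and> {p!0, p!i} \<in> E}"
  have fI: "finite I" unfolding I_def by (rule finite_subset[of _ "{..<length p}"]) auto
  have "{f\<in>E. x \<in> f} \<subseteq> (\<lambda>i. {p!0, p!i}) ` I"
  proof
    fix f assume f: "f \<in> {f\<in>E. x \<in> f}"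
    then obtain a' b' where ab': "a' \<noteq> b'" "f = {a', b'}" using smp by blast
    obtain w where w: "f = {x, w}" "w \<noteq> x" using f ab' by auto
    have "w \<in> set p" using nb f w by auto
    then obtain i where i: "i < length p" "p ! i = w" by (auto simp: in_set_conv_nth)
    have "0 < i" using i w x_def by (cases i) auto
    then have "i \<in> I" using i f w x_def by (auto simp: I_def)
    then show "f \<in> (\<lambda>i. {p!0, p!i}) ` I" using w i x_def by auto
  qed
  then have "degree E x \<le> card ((\<lambda>i. {p!0, p!i}) ` I)" unfolding degree_def
    by (rule card_mono[OF finite_imageI[OF fI]])
  also have "\<dots> \<le> card I" by (rule card_image_le[OF fI])
  finally have "degree E x \<le> card I" .
  then have cI: "card I \<ge> 3" using dx by simp
  define j where "j = Max I"
  have jI: "j \<in> I" unfolding j_def using fI cI by (intro Max_in) auto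
  have "card (I - {1, j}) \<ge> 1"
  proof -
    have "card I - card {1, j} \<le> card (I - {1, j})" by (rule diff_card_le_card_Diff) simp
    moreover have "card {1::nat, j} \<le> 2" by (simp add: card_insert_if)
    ultimately show ?thesis using cI by simp
  qed
  then obtain i where iI: "i \<in> I - {1, j}" by (metis card.empty ex_in_conv not_one_le_zero)
  have ij: "i \<le> j" unfolding j_def using fI iI by auto
  have i1: "1 < i" "i < j" using iI ij by (auto simp: I_def)
  have jl: "j < length p" using jI by (auto simp: I_def)
  define vs where "vs = take (Suc j) p"
  have lvs: "length vs = Suc j" using jl by (simp add: vs_def)
  have cyc: "is_cycle E vs" unfolding is_cycle_def
  proof (intro conjI allI impI)
    show "3 \<le> length vs" using lvs i1 by simp
    show "distinct vs" using pd by (simp add: vs_def)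
  next
    fix t assume t: "t < length vs"
    show "{vs ! t, vs ! ((t + 1) mod length vs)} \<in> E"
    proof (cases "t < j")
      case True
      then have "(t + 1) mod length vs = Suc t" using lvs by simp
      then show ?thesis using True pe[of t] jl lvs by (simp add: vs_def)
    next
      case False
      then have "t = j" using t lvs by simp
      then show ?thesis using jI lvs by (simp add: vs_def I_def insert_commute)
    qed
  qed
  have m1: "(i + 1) mod length vs = i + 1" using lvs i1 by simp
  have m2: "(0 + 1) mod length vs = 1" using lvs i1 by simp
  have "{vs ! i, vs ! 0} \<notin> E"
  proof -
    have A: "is_cycle E vs \<and> i < length vs \<and> 0 < length vs \<and> i \<noteq> 0
       \<and> 0 \<noteq> (i + 1) mod length vs \<and> i \<noteq> (0 + 1) mod length vs"
      using cyc i1 lvs m1 m2 by simp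
    show ?thesis using cl A unfolding chordless_def by blast
  qed
  moreover have "{vs ! i, vs ! 0} \<in> E" using iI i1 lvs by (simp add: vs_def I_def insert_commute)
  ultimately show False by blast
qed


lemma chordless_mono:
  assumes "chordless E" "E' \<subseteq> E" shows "chordless E'"
proof -
  have "is_cycle E vs" if "is_cycle E' vs" for vs
    using that assms(2) unfolding is_cycle_def by blast
  then show ?thesis using assms unfolding chordless_def by blast
qed

lemma main:
  assumes "finite E"
  shows "\<lbrakk>\<forall>e\<in>E. \<exists>u v. u \<noteq> v \<and> e = {u, v}; chordless E; \<forall>w. degree E w < k;
          proper_coloring E k \<alpha>; proper_coloring E k \<beta>\<rbrakk> \<Longrightarrow> K_equivalent E k \<alpha> \<beta>"
  using assms
proof (induction E arbitrary: \<alpha> \<beta> rule: finite_psubset_induct)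
  case (psubset E)
  show ?case
  proof (cases "E = {}")
    case True
    then show ?thesis unfolding K_equivalent_def by blast
  next
    case False
    obtain e u where eE: "e \<in> E" and ue: "u \<in> e" and du: "degree E u \<le> 2"
      using low_degree[OF psubset.hyps(1) psubset.prems(1,2) False] by blast
    have "\<exists>a b. a \<noteq> b \<and> e = {a, b}" using psubset.prems(1) eE by auto
    then obtain a b where ab: "e = {a, b}" by (elim exE conjE)
    obtain v where euv: "e = {u, v}"
      using ab ue by (metis insert_commute insertE singletonD)
    have dv: "degree E v < k" using psubset.prems(3) by blast
    define E' where "E' = E - {e}"
    have sub: "E' \<subset> E" using eE by (auto simp: E'_def)
    have fE': "finite E'" using psubset.hyps(1) by (simp add: E'_def)
    have dE': "\<forall>w. degree E' w < k"
    proof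
      fix w
      have "degree E' w \<le> degree E w" unfolding degree_def E'_def
        by (rule card_mono) (use psubset.hyps(1) in auto)
      then show "degree E' w < k" using psubset.prems(3) by (meson le_less_trans)
    qed
    have "K_equivalent E' k \<alpha> \<beta>"
      by (rule psubset.IH[OF sub])
        (use psubset.prems sub chordless_mono[of E E'] proper_mono[of E k _ E'] dE' in auto)
    then obtain \<gamma> where g: "(kempe_change (E - {e}) k)\<^sup>*\<^sup>* \<alpha> \<gamma>" "\<forall>f\<in>E - {e}. \<gamma> f = \<beta> f"
      unfolding K_equivalent_def E'_def by blast
    obtain \<delta> where d: "(kempe_change E k)\<^sup>*\<^sup>* \<alpha> \<delta>" "\<forall>f\<in>E - {e}. \<delta> f = \<gamma> f"
      using lift_seq[OF psubset.hyps(1) eE euv du dv g(1) psubset.prems(4)] by blast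
    have pd: "proper_coloring E k \<delta>" using kempe_rtrancl_proper[OF d(1) psubset.prems(4)] .
    show ?thesis
    proof (cases "\<delta> e = \<beta> e")
      case True
      then show ?thesis unfolding K_equivalent_def using d g by (metis DiffI singletonD)
    next
      case False
      have byr: "\<beta> e \<in> {1..k}" using psubset.prems(5) eE by (auto simp: proper_coloring_def)
      have free: "\<forall>f\<in>E. f \<noteq> e \<and> f \<inter> e \<noteq> {} \<longrightarrow> \<delta> f \<noteq> \<beta> e"
      proof (intro ballI impI)
        fix f assume f: "f \<in> E" "f \<noteq> e \<and> f \<inter> e \<noteq> {}"
        then have "\<delta> f = \<beta> f" using d g by auto
        moreover have "\<beta> f \<noteq> \<beta> e" using psubset.prems(5) f eE by (auto simp: proper_coloring_def)
        ultimately show "\<delta> f \<noteq> \<beta> e" by simp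
      qed
      have "kempe_change E k \<delta> (\<delta>(e := \<beta> e))"
        using single_recolor[OF pd eE byr _ free] False by auto
      then have "(kempe_change E k)\<^sup>*\<^sup>* \<alpha> (\<delta>(e := \<beta> e))" using d(1) by auto
      moreover have "\<forall>f\<in>E. (\<delta>(e := \<beta> e)) f = \<beta> f" using d g by auto
      ultimately show ?thesis unfolding K_equivalent_def by blast
    qed
  qed
qed

theorem corollary1p4:
  fixes V :: "'a set" and E :: "'a set set" and \<alpha> \<beta> :: "'a set \<Rightarrow> nat"
  assumes "simple_graph V E"
    and "chordless E"
    and "max_degree V E \<ge> 3"
    and "proper_coloring E (max_degree V E + 1) \<alpha>"
    and "proper_coloring E (max_degree V E + 1) \<beta>"
  shows "K_equivalent E (max_degree V E + 1) \<alpha> \<beta>"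
proof -
  have fV: "finite V" and sg: "\<forall>e\<in>E. \<exists>u v. u \<noteq> v \<and> u \<in> V \<and> v \<in> V \<and> e = {u, v}"
    using assms(1) unfolding simple_graph_def by auto
  have "E \<subseteq> Pow V" using sg by auto
  then have fE: "finite E" using fV by (meson finite_Pow_iff finite_subset)
  have s2: "\<forall>e\<in>E. \<exists>u v. u \<noteq> v \<and> e = {u, v}" using sg by blast
  have deg: "\<forall>w. degree E w < max_degree V E + 1"
  proof
    fix w
    show "degree E w < max_degree V E + 1"
    proof (cases "w \<in> V")
      case True
      then have "degree E w \<le> max_degree V E" unfolding max_degree_def
        using fV by (intro Max_ge) auto
      then show ?thesis by simp
    next
      case False
      then have "{e\<in>E. w \<in> e} = {}" using sg by auto
      then have "degree E w = 0" unfolding degree_def by (metis card.empty)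
      then show ?thesis by simp
    qed
  qed
  show ?thesis using main[OF fE s2 assms(2) deg assms(4,5)] .
qed

end
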